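(* Let $J\ge2$ and let the configuration $\{(\iota_1,z_1^* ),\dots,(\iota_J,z_J^* )\}$ be non-degenerate. Then $|A^*\vec\lambda^D|\simeq\lambda_{\max}^D$ for all $\vec\lambda\in(0,\infty)^J$.
   Context: $N\ge7$, $D=\frac{N-2}2$. $\iota_i\in\{\pm1\}$, $z_1^*,\dots,z_J^*\in\mathbb{R}^N$ distinct. $A^*$ is the $J\times J$ matrix $A^*_{ij}=\mathbf 1_{i\ne j}\kappa_0\kappa_\infty\frac{\iota_i\iota_j}{|z_i^*-z_j^*|^{N-2}}$ with positive constants $\kappa_0=\frac{N-2}2\frac{\int W^{\frac{N+2}{N-2}}}{\int(x\cdot\nabla W+\frac{N-2}2W)^2}$, $\kappa_\infty=(N(N-2))^{\frac{N-2}2}$, $W(x)=(1+\frac{|x|^2}{N(N-2)})^{-\frac{N-2}2}$. Non-degenerate: $A^*$ has no nonzero kernel element in $[0,\infty)^J$. $\vec\lambda^D=(\lambda_1^D,\dots,\lambda_J^D)$, $\lambda_{\max}=\max_i\lambda_i$. Implicit constants may depend on $N$, $J$ and the configuration, not on $\vec\lambda$. *)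

theory Defs
  imports "HOL-Analysis.Analysis"
begin

text \<open>Dimension N is CARD('n); points of R^N are of type real^'n.
  The J bubbles are indexed by a finite type 'j, J = CARD('j).\<close>

definition dimN :: "'n::finite itself \<Rightarrow> real" where
  "dimN _ = real CARD('n)"

definition Dexp :: "'n::finite itself \<Rightarrow> real" where
  "Dexp t = (dimN t - 2) / 2"

definition Wbubble :: "real^'n::finite \<Rightarrow> real" where
  "Wbubble x = (1 + (norm x)^2 / (dimN TYPE('n) * (dimN TYPE('n) - 2)))
                 powr (- (dimN TYPE('n) - 2) / 2)"

definition kappa0 :: "'n::finite itself \<Rightarrow> real" where
  "kappa0 t = (dimN t - 2) / 2 *
     (LINT x|lborel. (Wbubble (x::real^'n)) powr ((dimN t + 2) / (dimN t - 2)))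
     / (LINT x|lborel. ((frechet_derivative Wbubble (at (x::real^'n))) x
                         + (dimN t - 2) / 2 * Wbubble x)^2)"

definition kappa_inf :: "'n::finite itself \<Rightarrow> real" where
  "kappa_inf t = (dimN t * (dimN t - 2)) powr ((dimN t - 2) / 2)"

definition Astar :: "('j::finite \<Rightarrow> real) \<Rightarrow> ('j \<Rightarrow> real^'n::finite) \<Rightarrow> real^'j^'j" where
  "Astar iota z = (\<chi> i j. if i \<noteq> j then
       kappa0 TYPE('n) * kappa_inf TYPE('n) * iota i * iota j
         / (norm (z i - z j)) powr (dimN TYPE('n) - 2)
     else 0)"

definition nondegenerate :: "('j::finite \<Rightarrow> real) \<Rightarrow> ('j \<Rightarrow> real^'n::finite) \<Rightarrow> bool" where
  "nondegenerate iota z \<longleftrightarrow>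
     (\<forall>v::real^'j. (\<forall>i. 0 \<le> v$i) \<and> Astar iota z *v v = 0 \<longrightarrow> v = 0)"

definition lam_pow :: "real^'j::finite \<Rightarrow> real \<Rightarrow> real^'j" where
  "lam_pow lam D = (\<chi> i. (lam$i) powr D)"

definition lam_max :: "real^'j::finite \<Rightarrow> real" where
  "lam_max lam = Max (range (\<lambda>i. lam$i))"

end

theory Submission
  imports Defs
begin

lemma cone_bounds:
  fixes A :: "real^'j::finite^'j"
  assumes nd: "\<forall>v::real^'j. (\<forall>i. 0 \<le> v$i) \<and> A *v v = 0 \<longrightarrow> v = 0"
  shows "\<exists>m M. 0 < m \<and> 0 < M \<and> (\<forall>v. (\<forall>i. 0 \<le> v$i) \<longrightarrow>
           m * norm v \<le> norm (A *v v) \<and> norm (A *v v) \<le> M * norm v)"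
proof -
  define S where "S = {v::real^'j. \<forall>i. 0 \<le> v$i} \<inter> sphere 0 1"
  have cl: "closed {v::real^'j. \<forall>i. 0 \<le> v$i}"
    by (intro closed_Collect_all closed_Collect_le continuous_intros)
  have cS: "compact S" unfolding S_def
    by (intro closed_Int_compact cl compact_sphere)
  obtain i0 :: 'j where True by simp
  have "axis i0 (1::real) \<in> S" unfolding S_def
    using norm_axis_1[of i0] by (simp add: axis_def)
  hence ne: "S \<noteq> {}" by blast
  have ct: "continuous_on S (\<lambda>v. norm (A *v v))"
    by (intro continuous_on_norm matrix_vector_mult_linear_continuous_on)
  obtain a where a: "a \<in> S" "\<forall>y\<in>S. norm (A *v a) \<le> norm (A *v y)"
    using continuous_attains_inf[OF cS ne ct] by blast
  obtain b where b: "b \<in> S" "\<forall>y\<in>S. norm (A *v y) \<le> norm (A *v b)"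
    using continuous_attains_sup[OF cS ne ct] by blast
  have "a \<noteq> 0" using a(1) by (auto simp: S_def)
  hence m: "0 < norm (A *v a)" using nd a(1) by (auto simp: S_def)
  have M: "0 < norm (A *v b) + 1" by (simp add: add_nonneg_pos)
  have key: "norm (A *v a) * norm v \<le> norm (A *v v) \<and> norm (A *v v) \<le> (norm (A *v b) + 1) * norm v"
    if v: "\<forall>i. 0 \<le> v$i" for v
  proof (cases "v = 0")
    case True then show ?thesis by simp
  next
    case False
    define u where "u = (1 / norm v) *\<^sub>R v"
    have uS: "u \<in> S" using v False by (auto simp: S_def u_def)
    have eq: "A *v v = norm v *\<^sub>R (A *v u)"
      using False by (simp add: u_def matrix_vector_mult_scaleR)
    have n: "norm (A *v v) = norm v * norm (A *v u)" by (simp add: eq)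
    have "norm (A *v a) * norm v \<le> norm (A *v u) * norm v"
      using a(2) uS by (simp add: mult_right_mono)
    moreover have "norm (A *v u) * norm v \<le> (norm (A *v b) + 1) * norm v"
      using b(2) uS by (intro mult_right_mono) auto
    ultimately show ?thesis using n by (simp add: mult.commute)
  qed
  show ?thesis using m M key by blast
qed

theorem lemma4p1:
  fixes iota :: "'j::finite \<Rightarrow> real" and z :: "'j \<Rightarrow> real^'n::finite"
  assumes "CARD('n) \<ge> 7"
    and "CARD('j) \<ge> 2"
    and "\<forall>i. iota i \<in> {-1, 1}"
    and "inj z"
    and "nondegenerate iota z"
  shows "\<exists>c C. 0 < c \<and> 0 < C \<and>
    (\<forall>lam::real^'j. (\<forall>i. 0 < lam$i) \<longrightarrow>
       c * lam_max lam powr Dexp TYPE('n)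
         \<le> norm (Astar iota z *v lam_pow lam (Dexp TYPE('n))) \<and>
       norm (Astar iota z *v lam_pow lam (Dexp TYPE('n)))
         \<le> C * lam_max lam powr Dexp TYPE('n))"
proof -
  define A where "A = Astar iota z"
  define D where "D = Dexp TYPE('n)"
  have Dpos: "0 < D" using assms(1) by (simp add: D_def Dexp_def dimN_def)
  obtain m M where mM: "0 < m" "0 < M" "\<forall>v. (\<forall>i. 0 \<le> v$i) \<longrightarrow>
           m * norm v \<le> norm (A *v v) \<and> norm (A *v v) \<le> M * norm v"
    using cone_bounds[of A] assms(5) by (auto simp: A_def nondegenerate_def)
  have main: "m * lam_max lam powr D \<le> norm (A *v lam_pow lam D) \<and>
       norm (A *v lam_pow lam D) \<le> (M * real CARD('j)) * lam_max lam powr D"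
    if lp: "\<forall>i. 0 < lam$i" for lam :: "real^'j"
  proof -
    define v where "v = lam_pow lam D"
    have vnn: "\<forall>i. 0 \<le> v$i" by (simp add: v_def lam_pow_def)
    have "lam_max lam \<in> range (\<lambda>i. lam$i)" unfolding lam_max_def
      by (intro Max_in) auto
    then obtain i0 where i0: "lam_max lam = lam$i0" by auto
    have le: "lam$i \<le> lam$i0" for i
      using i0 unfolding lam_max_def by (metis Max_ge finite UNIV_I finite_imageI image_eqI)
    have vi0: "v$i0 = lam_max lam powr D" by (simp add: v_def lam_pow_def i0)
    have vle: "\<bar>v$i\<bar> \<le> v$i0" for i
      using le[of i] lp Dpos by (simp add: v_def lam_pow_def powr_mono2 less_imp_le)
    have n1: "v$i0 \<le> norm v" using component_le_norm_cart[of v i0] by simp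
    have "norm v \<le> (\<Sum>i\<in>UNIV. \<bar>v$i\<bar>)" by (rule norm_le_l1_cart)
    also have "\<dots> \<le> (\<Sum>i\<in>(UNIV::'j set). v$i0)" by (intro sum_mono vle)
    also have "\<dots> = real CARD('j) * v$i0" by simp
    finally have n2: "norm v \<le> real CARD('j) * v$i0" .
    have "m * v$i0 \<le> m * norm v" using n1 mM(1) by simp
    moreover have "M * norm v \<le> M * (real CARD('j) * v$i0)" using n2 mM(2) by simp
    ultimately show ?thesis using mM(3) vnn vi0 unfolding v_def[symmetric]
      by (smt (verit) mult.assoc)
  qed
  show ?thesis
    using main mM(1,2) unfolding A_def D_def
    by (intro exI[of _ m] exI[of _ "M * real CARD('j)"]) auto
qed

end
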